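(* (Explicit Rayleigh's Shorting Law.) Let $\Gamma$ be a metrized graph and let $p,q,s,t\in\Gamma$ with $p\neq q$. Then $$r(s,t)=r_{\Gamma_{pq}}(s,t)+\frac{1}{r(p,q)}\big[j_p(q,s)-j_p(q,t)\big]^2 .$$ In particular $r(s,t)\ge r_{\Gamma_{pq}}(s,t)$, and equality holds if and only if $j_p(q,s)=j_p(q,t)$.
   Context: A metrized graph $\Gamma$ is a finite connected graph (multiple edges and self-loops allowed) in which each edge is identified with a closed line segment of positive length; any finite set of points may be declared vertices. $\Gamma$ is regarded as a resistive electric circuit in which each edge is a resistor whose resistance equals its length. For $x,y\in\Gamma$, $r(x,y)$ is the effective resistance between $x$ and $y$. For $x,y,z\in\Gamma$, $j_z(x,y)$ is the voltage at $x$ when a unit current enters the circuit at $y$ and exits at $z$, with reference voltage $0$ at $z$ (so $j_x(y,y)=r(x,y)$). For $p,q\in\Gamma$, $\Gamma_{pq}$ denotes the metrized graph obtained from $\Gamma$ by identifying the points $p$ and $q$; $r_{\Gamma_{pq}}$ and $j^{\Gamma_{pq}}$ denote the resistance and voltage functions on $\Gamma_{pq}$ (points of $\Gamma$ are regarded as points of $\Gamma_{pq}$ via the quotient map). *)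

theory Defs
  imports Complex_Main
begin

text \<open>A metrized graph is modelled by a finite connected multigraph (self-loops and
multiple edges allowed): vertex set V, edge set E, endpoint map ends and
edge lengths len (= resistances).  Points of interest are declared vertices
(any finite set of points of a metrized graph may be declared vertices).\<close>

definition adjacent :: "'e set \<Rightarrow> ('e \<Rightarrow> 'a \<times> 'a) \<Rightarrow> 'a \<Rightarrow> 'a \<Rightarrow> bool" where
  "adjacent E ends a b \<longleftrightarrow> (\<exists>e\<in>E. ends e = (a, b) \<or> ends e = (b, a))"

definition metrized_graph ::
  "'a set \<Rightarrow> 'e set \<Rightarrow> ('e \<Rightarrow> 'a \<times> 'a) \<Rightarrow> ('e \<Rightarrow> real) \<Rightarrow> bool" where
  "metrized_graph V E ends len \<longleftrightarrow>
     finite V \<and> V \<noteq> {} \<and> finite E \<and>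
     (\<forall>e\<in>E. fst (ends e) \<in> V \<and> snd (ends e) \<in> V \<and> len e > 0) \<and>
     (\<forall>a\<in>V. \<forall>b\<in>V. (adjacent E ends)\<^sup>*\<^sup>* a b)"

definition outflow ::
  "'e set \<Rightarrow> ('e \<Rightarrow> 'a \<times> 'a) \<Rightarrow> ('e \<Rightarrow> real) \<Rightarrow> ('a \<Rightarrow> real) \<Rightarrow> 'a \<Rightarrow> real" where
  "outflow E ends len v w =
     (\<Sum>e\<in>E. (if fst (ends e) = w then (v w - v (snd (ends e))) / len e else 0)
            + (if snd (ends e) = w then (v w - v (fst (ends e))) / len e else 0))"

text \<open>v is the potential when a unit current enters at y and exits at z,
with reference potential 0 at z (normalised to 0 outside V).\<close>
definition is_voltage ::
  "'a set \<Rightarrow> 'e set \<Rightarrow> ('e \<Rightarrow> 'a \<times> 'a) \<Rightarrow> ('e \<Rightarrow> real) \<Rightarrow> 'a \<Rightarrow> 'a \<Rightarrow> ('a \<Rightarrow> real) \<Rightarrow> bool" where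
  "is_voltage V E ends len z y v \<longleftrightarrow>
     v z = 0 \<and> (\<forall>w. w \<notin> V \<longrightarrow> v w = 0) \<and>
     (\<forall>w\<in>V. outflow E ends len v w = (if w = y then 1 else 0) - (if w = z then 1 else 0))"

text \<open>jv V E ends len z x y = j_z(x,y): voltage at x, unit current in at y, out at z.\<close>
definition jv ::
  "'a set \<Rightarrow> 'e set \<Rightarrow> ('e \<Rightarrow> 'a \<times> 'a) \<Rightarrow> ('e \<Rightarrow> real) \<Rightarrow> 'a \<Rightarrow> 'a \<Rightarrow> 'a \<Rightarrow> real" where
  "jv V E ends len z x y = (THE v. is_voltage V E ends len z y v) x"

definition eff_res ::
  "'a set \<Rightarrow> 'e set \<Rightarrow> ('e \<Rightarrow> 'a \<times> 'a) \<Rightarrow> ('e \<Rightarrow> real) \<Rightarrow> 'a \<Rightarrow> 'a \<Rightarrow> real" where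
  "eff_res V E ends len x y = jv V E ends len x y y"

definition ident :: "'a \<Rightarrow> 'a \<Rightarrow> 'a \<Rightarrow> 'a" where
  "ident p q w = (if w = q then p else w)"

definition glue_V :: "'a set \<Rightarrow> 'a \<Rightarrow> 'a \<Rightarrow> 'a set" where
  "glue_V V p q = ident p q ` V"

definition glue_ends :: "('e \<Rightarrow> 'a \<times> 'a) \<Rightarrow> 'a \<Rightarrow> 'a \<Rightarrow> 'e \<Rightarrow> 'a \<times> 'a" where
  "glue_ends ends p q e = map_prod (ident p q) (ident p q) (ends e)"

end

theory Submission imports Defs begin

locale mg =
  fixes V :: "'a set" and E :: "'e set" and ends :: "'e \<Rightarrow> 'a \<times> 'a" and len :: "'e \<Rightarrow> real"
  assumes mg: "metrized_graph V E ends len"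
begin

lemma finV: "finite V" and finE: "finite E"
  and fstV: "e \<in> E \<Longrightarrow> fst (ends e) \<in> V" and sndV: "e \<in> E \<Longrightarrow> snd (ends e) \<in> V"
  and lenpos: "e \<in> E \<Longrightarrow> len e > 0"
  and conn: "a \<in> V \<Longrightarrow> b \<in> V \<Longrightarrow> (adjacent E ends)\<^sup>*\<^sup>* a b"
  using mg by (auto simp: metrized_graph_def)

abbreviation L where "L v w \<equiv> outflow E ends len v w"

lemma outflow_lin: "L (\<lambda>x. a * f x + g x) w = a * L f w + L g w"
proof -
  define T where "T = (\<lambda>v e. (if fst (ends e) = w then (v w - v (snd (ends e))) / len e else 0)
            + (if snd (ends e) = w then (v w - v (fst (ends e))) / len e else 0))"
  have o: "\<And>v. L v w = sum (T v) E" by (simp add: outflow_def T_def)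
  have t: "\<And>e. T (\<lambda>x. a * f x + g x) e = a * T f e + T g e"
    by (simp add: T_def add_divide_distrib diff_divide_distrib algebra_simps)
  have "sum (T (\<lambda>x. a * f x + g x)) E = (\<Sum>e\<in>E. a * T f e + T g e)" using t by (intro sum.cong) auto
  then show ?thesis unfolding o by (simp add: sum.distrib sum_distrib_left)
qed

lemma outflow_diff: "L (\<lambda>x. f x - c * g x) w = L f w - c * L g w"
  using outflow_lin[of "-c" g f w] by (simp add: algebra_simps)

lemma outflow_zero: "L (\<lambda>x. 0) w = 0"
  unfolding outflow_def by (rule sum.neutral) simp

lemma outflow_sum: "finite S \<Longrightarrow> L (\<lambda>x. \<Sum>u\<in>S. c u * g u x) w = (\<Sum>u\<in>S. c u * L (g u) w)"
proof (induction S rule: finite_induct)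
  case empty then show ?case by (simp add: outflow_zero)
next
  case (insert a S)
  then show ?case using outflow_lin[of "c a" "g a" "\<lambda>x. \<Sum>u\<in>S. c u * g u x" w] by simp
qed

lemma edge_sum:
  fixes u v :: "'a \<Rightarrow> real"
  assumes "a \<in> V" "b \<in> V" "(l::real) \<noteq> 0"
  shows "(\<Sum>w\<in>V. u w * ((if a = w then (v w - v b) / l else 0) + (if b = w then (v w - v a) / l else 0)))
     = (u a - u b) * (v a - v b) / l"
proof -
  have "(\<Sum>w\<in>V. u w * ((if a = w then (v w - v b) / l else 0) + (if b = w then (v w - v a) / l else 0)))
        = (\<Sum>w\<in>V. (if a = w then u w * (v w - v b) / l else 0) + (if b = w then u w * (v w - v a) / l else 0))"
    by (intro sum.cong) auto
  also have "\<dots> = u a * (v a - v b) / l + u b * (v b - v a) / l"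
    using assms finV by (simp add: sum.distrib sum.delta sum.delta')
  also have "\<dots> = (u a - u b) * (v a - v b) / l" using assms(3) by (simp add: field_simps)
  finally show ?thesis .
qed

lemma green: "(\<Sum>w\<in>V. u w * L v w) =
  (\<Sum>e\<in>E. (u (fst (ends e)) - u (snd (ends e))) * (v (fst (ends e)) - v (snd (ends e))) / len e)"
proof -
  have "(\<Sum>w\<in>V. u w * L v w) = (\<Sum>e\<in>E. \<Sum>w\<in>V. u w * ((if fst (ends e) = w then (v w - v (snd (ends e))) / len e else 0)
            + (if snd (ends e) = w then (v w - v (fst (ends e))) / len e else 0)))"
    unfolding outflow_def by (simp add: sum_distrib_left sum.swap[of _ E V])
  also have "\<dots> = (\<Sum>e\<in>E. (u (fst (ends e)) - u (snd (ends e))) * (v (fst (ends e)) - v (snd (ends e))) / len e)"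
  proof (rule sum.cong[OF refl])
    fix e assume e: "e \<in> E"
    show "(\<Sum>w\<in>V. u w * ((if fst (ends e) = w then (v w - v (snd (ends e))) / len e else 0)
            + (if snd (ends e) = w then (v w - v (fst (ends e))) / len e else 0))) =
          (u (fst (ends e)) - u (snd (ends e))) * (v (fst (ends e)) - v (snd (ends e))) / len e"
      by (rule edge_sum) (use e fstV sndV lenpos[OF e] in auto)
  qed
  finally show ?thesis .
qed

lemma sum_outflow: "(\<Sum>w\<in>V. L v w) = 0"
  using green[of "\<lambda>_. 1" v] by simp

lemma eterm_nonneg: "e \<in> E \<Longrightarrow> (x - y) * (x - y) / len e \<ge> (0::real)"
  using lenpos[of e] by (intro divide_nonneg_pos) auto

lemma energy_nonneg: "(\<Sum>w\<in>V. v w * L v w) \<ge> 0"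
  unfolding green by (rule sum_nonneg) (rule eterm_nonneg)

lemma energy_zero:
  assumes "(\<Sum>w\<in>V. v w * L v w) = 0" "x \<in> V" "y \<in> V"
  shows "v x = v y"
proof -
  have "\<forall>e\<in>E. (v (fst (ends e)) - v (snd (ends e))) * (v (fst (ends e)) - v (snd (ends e))) / len e = 0"
  proof -
    have "(\<Sum>e\<in>E. (v (fst (ends e)) - v (snd (ends e))) * (v (fst (ends e)) - v (snd (ends e))) / len e) = 0
      \<longleftrightarrow> (\<forall>e\<in>E. (v (fst (ends e)) - v (snd (ends e))) * (v (fst (ends e)) - v (snd (ends e))) / len e = 0)"
      by (rule sum_nonneg_eq_0_iff[OF finE]) (rule eterm_nonneg)
    then show ?thesis using assms(1) unfolding green by blast
  qed
  then have edge: "\<And>e. e \<in> E \<Longrightarrow> v (fst (ends e)) = v (snd (ends e))"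
    using lenpos by fastforce
  have adj: "adjacent E ends a b \<Longrightarrow> v a = v b" for a b
    unfolding adjacent_def using edge by (metis fst_conv snd_conv)
  have "(adjacent E ends)\<^sup>*\<^sup>* x y" using conn assms by blast
  then show ?thesis
  proof (induction rule: rtranclp_induct)
    case base then show ?case by simp
  next
    case (step y z) then show ?case using adj by simp
  qed
qed

lemma const_outflow:
  assumes "\<And>x y. x \<in> V \<Longrightarrow> y \<in> V \<Longrightarrow> v x = v y" "w \<in> V"
  shows "L v w = 0"
  unfolding outflow_def
proof (rule sum.neutral, rule ballI)
  fix e assume e: "e \<in> E"
  have "v (fst (ends e)) = v w" "v (snd (ends e)) = v w"
    using assms(1)[OF fstV[OF e] assms(2)] assms(1)[OF sndV[OF e] assms(2)] .
  then show "(if fst (ends e) = w then (v w - v (snd (ends e))) / len e else 0) +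
         (if snd (ends e) = w then (v w - v (fst (ends e))) / len e else 0) = 0" by simp
qed

lemma voltage_unique:
  assumes "z \<in> V" "is_voltage V E ends len z y v1" "is_voltage V E ends len z y v2"
  shows "v1 = v2"
proof -
  define d where "d = (\<lambda>x. v1 x - 1 * v2 x)"
  have Ld: "w \<in> V \<Longrightarrow> L d w = 0" for w
    using assms unfolding d_def outflow_diff by (simp add: is_voltage_def)
  have "(\<Sum>w\<in>V. d w * L d w) = 0" using Ld by simp
  then have c: "x \<in> V \<Longrightarrow> d x = d z" for x using energy_zero assms(1) by blast
  show ?thesis
  proof
    fix x show "v1 x = v2 x"
    proof (cases "x \<in> V")
      case True then show ?thesis using c[OF True] assms by (simp add: d_def is_voltage_def)
    next
      case False then show ?thesis using assms by (simp add: is_voltage_def)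
    qed
  qed
qed

lemma lin_alt:
  fixes K :: "'r \<Rightarrow> 'c \<Rightarrow> real"
  assumes "finite R" "finite C" "card R = card C"
  shows "(\<exists>v. (\<exists>u\<in>C. v u \<noteq> 0) \<and> (\<forall>w\<in>R. (\<Sum>u\<in>C. K w u * v u) = 0))
         \<or> (\<forall>f. \<exists>v. \<forall>w\<in>R. (\<Sum>u\<in>C. K w u * v u) = f w)"
  using assms
proof (induction "card C" arbitrary: R C K)
  case 0
  then have "R = {}" by simp
  then show ?case by simp
next
  case (Suc n)
  then have "C \<noteq> {}" by auto
  then obtain a where aC: "a \<in> C" by blast
  define C' where "C' = C - {a}"
  have cardC': "card C' = n" using Suc aC by (simp add: C'_def)
  have finC': "finite C'" using Suc by (simp add: C'_def)
  have splitC: "\<And>v w. (\<Sum>u\<in>C. K w u * v u) = K w a * v a + (\<Sum>u\<in>C'. K w u * v u)"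
    using Suc(4) aC by (simp add: C'_def sum.remove)
  show ?case
  proof (cases "\<forall>w\<in>R. K w a = 0")
    case True
    let ?v = "\<lambda>x. if x = a then (1::real) else 0"
    have "\<forall>w\<in>R. (\<Sum>u\<in>C. K w u * ?v u) = 0"
    proof
      fix w assume "w \<in> R"
      have "(\<Sum>u\<in>C'. K w u * ?v u) = 0" by (rule sum.neutral) (simp add: C'_def)
      then show "(\<Sum>u\<in>C. K w u * ?v u) = 0" using splitC[of w ?v] True \<open>w \<in> R\<close> by simp
    qed
    then show ?thesis using aC by (intro disjI1 exI[of _ ?v]) auto
  next
    case False
    then obtain b where bR: "b \<in> R" and kba: "K b a \<noteq> 0" by auto
    define R' where "R' = R - {b}"
    have cardR': "card R' = n" using Suc bR by (simp add: R'_def)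
    have finR': "finite R'" using Suc by (simp add: R'_def)
    define K' where "K' = (\<lambda>w u. K w u - K w a * K b u / K b a)"
    have red: "\<And>v w. (\<Sum>u\<in>C'. K' w u * v u) = (\<Sum>u\<in>C'. K w u * v u) - K w a / K b a * (\<Sum>u\<in>C'. K b u * v u)"
    proof -
      fix v w
      have "\<And>u. K' w u * v u = K w u * v u - K w a / K b a * (K b u * v u)"
        by (simp add: K'_def algebra_simps)
      then show "(\<Sum>u\<in>C'. K' w u * v u) = (\<Sum>u\<in>C'. K w u * v u) - K w a / K b a * (\<Sum>u\<in>C'. K b u * v u)"
        by (simp add: sum_subtractf sum_distrib_left)
    qed
    have upd: "\<And>v x w. (\<Sum>u\<in>C'. K w u * (v(a := x)) u) = (\<Sum>u\<in>C'. K w u * v u)"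
      by (rule sum.cong) (auto simp: C'_def)
    have IH: "(\<exists>v. (\<exists>u\<in>C'. v u \<noteq> 0) \<and> (\<forall>w\<in>R'. (\<Sum>u\<in>C'. K' w u * v u) = 0))
         \<or> (\<forall>f. \<exists>v. \<forall>w\<in>R'. (\<Sum>u\<in>C'. K' w u * v u) = f w)"
      using Suc(1)[of C' R' K'] cardC' finC' finR' cardR' Suc(2) by simp
    then show ?thesis
    proof
      assume "\<exists>v. (\<exists>u\<in>C'. v u \<noteq> 0) \<and> (\<forall>w\<in>R'. (\<Sum>u\<in>C'. K' w u * v u) = 0)"
      then obtain v' where nz: "\<exists>u\<in>C'. v' u \<noteq> 0" and ker: "\<forall>w\<in>R'. (\<Sum>u\<in>C'. K' w u * v' u) = 0" by blast
      define v where "v = v'(a := - (\<Sum>u\<in>C'. K b u * v' u) / K b a)"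
      have "\<exists>u\<in>C. v u \<noteq> 0" using nz by (auto simp: v_def C'_def)
      moreover have "\<forall>w\<in>R. (\<Sum>u\<in>C. K w u * v u) = 0"
      proof
        fix w assume wR: "w \<in> R"
        have e: "(\<Sum>u\<in>C. K w u * v u) = K w a * (- (\<Sum>u\<in>C'. K b u * v' u) / K b a) + (\<Sum>u\<in>C'. K w u * v' u)"
          using splitC[of w v] upd by (simp add: v_def)
        show "(\<Sum>u\<in>C. K w u * v u) = 0"
        proof (cases "w = b")
          case True then show ?thesis using e kba by simp
        next
          case False
          then have "w \<in> R'" using wR by (simp add: R'_def)
          then have "(\<Sum>u\<in>C'. K' w u * v' u) = 0" using ker by blast
          moreover have "K w a * (- (\<Sum>u\<in>C'. K b u * v' u) / K b a) = - (K w a / K b a * (\<Sum>u\<in>C'. K b u * v' u))"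
            by simp
          ultimately show ?thesis using e red[of w v'] by linarith
        qed
      qed
      ultimately show ?thesis by blast
    next
      assume sol: "\<forall>f. \<exists>v. \<forall>w\<in>R'. (\<Sum>u\<in>C'. K' w u * v u) = f w"
      show ?thesis
      proof (rule disjI2, rule allI)
        fix f :: "'r \<Rightarrow> real"
        obtain v' where v': "\<forall>w\<in>R'. (\<Sum>u\<in>C'. K' w u * v' u) = f w - K w a * f b / K b a"
          using sol[rule_format, of "\<lambda>w. f w - K w a * f b / K b a"] by blast
        define v where "v = v'(a := (f b - (\<Sum>u\<in>C'. K b u * v' u)) / K b a)"
        have "\<forall>w\<in>R. (\<Sum>u\<in>C. K w u * v u) = f w"
        proof
          fix w assume wR: "w \<in> R"
          have e: "(\<Sum>u\<in>C. K w u * v u) = K w a * ((f b - (\<Sum>u\<in>C'. K b u * v' u)) / K b a) + (\<Sum>u\<in>C'. K w u * v' u)"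
            using splitC[of w v] upd by (simp add: v_def)
          show "(\<Sum>u\<in>C. K w u * v u) = f w"
          proof (cases "w = b")
            case True then show ?thesis using e kba by simp
          next
            case False
            then have "w \<in> R'" using wR by (simp add: R'_def)
            then have "(\<Sum>u\<in>C'. K' w u * v' u) = f w - K w a * f b / K b a" using v' by blast
            moreover have "K w a * ((f b - (\<Sum>u\<in>C'. K b u * v' u)) / K b a) = K w a * f b / K b a - K w a / K b a * (\<Sum>u\<in>C'. K b u * v' u)"
              using kba by (simp add: field_simps)
            ultimately show ?thesis using e red[of w v'] by linarith
          qed
        qed
        then show "\<exists>v. \<forall>w\<in>R. (\<Sum>u\<in>C. K w u * v u) = f w" by blast
      qed
    qed
  qed
qed



lemma voltage_exists:
  assumes zV: "z \<in> V" and yV: "y \<in> V"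
  shows "\<exists>v. is_voltage V E ends len z y v"
proof -
  define K where "K = (\<lambda>w u. if w = z then (if u = z then 1 else 0) else L (\<lambda>x. if x = u then 1 else 0) w)"
  define res where "res = (\<lambda>v::'a\<Rightarrow>real. \<lambda>x. if x \<in> V then v x else 0)"
  have resum: "res v = (\<lambda>x. \<Sum>u\<in>V. v u * (if x = u then 1 else 0))" for v
    using finV by (auto simp: res_def if_distrib sum.delta cong: if_cong)
  have rowK: "(\<Sum>u\<in>V. K w u * v u) = (if w = z then res v z else L (res v) w)" for w v
  proof (cases "w = z")
    case True
    have "(\<Sum>u\<in>V. K w u * v u) = (\<Sum>u\<in>V. if u = z then v u else 0)"
      using True by (intro sum.cong) (auto simp: K_def)
    also have "\<dots> = v z" using zV finV by (simp add: sum.delta)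
    finally show ?thesis using True zV by (simp add: res_def)
  next
    case False
    have "(\<Sum>u\<in>V. K w u * v u) = (\<Sum>u\<in>V. v u * L (\<lambda>x. if x = u then 1 else 0) w)"
      using False by (intro sum.cong) (auto simp: K_def)
    also have "\<dots> = L (\<lambda>x. \<Sum>u\<in>V. v u * (if x = u then 1 else 0)) w"
      by (rule outflow_sum[OF finV, of v "\<lambda>u x. if x = u then 1 else 0" w, symmetric])
    also have "\<dots> = L (res v) w" by (simp only: resum)
    finally show ?thesis using False by simp
  qed
  have "(\<exists>v. (\<exists>u\<in>V. v u \<noteq> 0) \<and> (\<forall>w\<in>V. (\<Sum>u\<in>V. K w u * v u) = 0))
         \<or> (\<forall>f. \<exists>v. \<forall>w\<in>V. (\<Sum>u\<in>V. K w u * v u) = f w)"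
    by (rule lin_alt) (use finV in auto)
  then show ?thesis
  proof
    assume "\<exists>v. (\<exists>u\<in>V. v u \<noteq> 0) \<and> (\<forall>w\<in>V. (\<Sum>u\<in>V. K w u * v u) = 0)"
    then obtain v u where uV: "u \<in> V" and nz: "v u \<noteq> 0" and ker: "\<forall>w\<in>V. (\<Sum>u\<in>V. K w u * v u) = 0" by blast
    have z0: "res v z = 0" using ker[rule_format, OF zV] rowK[of z v] by simp
    have Lw: "w \<in> V - {z} \<Longrightarrow> L (res v) w = 0" for w using ker[rule_format, of w] rowK[of w v] by auto
    have "(\<Sum>w\<in>V. L (res v) w) = L (res v) z + (\<Sum>w\<in>V - {z}. L (res v) w)"
      using finV zV by (simp add: sum.remove)
    then have Lz: "L (res v) z = 0" using sum_outflow Lw by simp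
    have "(\<Sum>w\<in>V. res v w * L (res v) w) = 0"
      using Lz Lw by (intro sum.neutral) force
    then have "res v u = res v z" using energy_zero uV zV by blast
    then show ?thesis using z0 nz uV by (simp add: res_def)
  next
    assume "\<forall>f. \<exists>v. \<forall>w\<in>V. (\<Sum>u\<in>V. K w u * v u) = f w"
    from this[rule_format, of "\<lambda>w. if w = z then 0 else if w = y then 1 else 0"]
    obtain v where v: "\<forall>w\<in>V. (\<Sum>u\<in>V. K w u * v u) = (if w = z then 0 else if w = y then 1 else 0)"
      by blast
    have z0: "res v z = 0" using v[rule_format, OF zV] rowK[of z v] by simp
    have Lw: "w \<in> V - {z} \<Longrightarrow> L (res v) w = (if w = y then 1 else 0)" for w using v[rule_format, of w] rowK[of w v] by auto
    have "(\<Sum>w\<in>V. L (res v) w) = L (res v) z + (\<Sum>w\<in>V - {z}. L (res v) w)"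
      using finV zV by (simp add: sum.remove)
    also have "(\<Sum>w\<in>V - {z}. L (res v) w) = (\<Sum>w\<in>V - {z}. (if w = y then 1 else 0))"
      using Lw by (rule sum.cong[OF refl])
    also have "\<dots> = (if y = z then 0 else 1)" using finV yV by (simp add: sum.delta')
    finally have Lz: "L (res v) z = (if z = y then 1 else 0) - 1" using sum_outflow by auto
    have "is_voltage V E ends len z y (res v)"
      unfolding is_voltage_def
    proof (intro conjI ballI allI impI)
      show "res v z = 0" by fact
    next
      fix w assume "w \<notin> V" then show "res v w = 0" by (simp add: res_def)
    next
      fix w assume wV: "w \<in> V"
      show "L (res v) w = (if w = y then 1 else 0) - (if w = z then 1 else 0)"
        using Lz Lw wV by (cases "w = z") auto
    qed
    then show ?thesis by blast
  qed
qed

definition volt where "volt z y = (THE v. is_voltage V E ends len z y v)"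

lemma volt_eq: "z \<in> V \<Longrightarrow> is_voltage V E ends len z y v \<Longrightarrow> volt z y = v"
  unfolding volt_def by (rule the_equality) (use voltage_unique in blast)+

lemma volt: "z \<in> V \<Longrightarrow> y \<in> V \<Longrightarrow> is_voltage V E ends len z y (volt z y)"
  using voltage_exists volt_eq by metis

lemma jv_volt: "jv V E ends len z x y = volt z y x"
  by (simp add: jv_def volt_def)

lemma pairing:
  assumes "is_voltage V E ends len z y v" "z \<in> V" "y \<in> V"
  shows "(\<Sum>w\<in>V. u w * L v w) = u y - u z"
proof -
  have "(\<Sum>w\<in>V. u w * L v w) = (\<Sum>w\<in>V. (if w = y then u w else 0) - (if w = z then u w else 0))"
    using assms(1) by (intro sum.cong) (auto simp: is_voltage_def)
  also have "\<dots> = u y - u z" using assms finV by (simp add: sum_subtractf sum.delta)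
  finally show ?thesis .
qed

lemma recip:
  assumes "is_voltage V E ends len z1 y1 f" "z1 \<in> V" "y1 \<in> V"
    "is_voltage V E ends len z2 y2 g" "z2 \<in> V" "y2 \<in> V"
  shows "f y2 - f z2 = g y1 - g z1"
proof -
  have "f y2 - f z2 = (\<Sum>w\<in>V. f w * L g w)" using pairing assms by simp
  also have "\<dots> = (\<Sum>w\<in>V. g w * L f w)" unfolding green by (intro sum.cong) (auto simp: mult.commute)
  also have "\<dots> = g y1 - g z1" using pairing assms by simp
  finally show ?thesis .
qed

end


lemma ident_in: "x \<in> V \<Longrightarrow> ident p q x \<in> glue_V V p q"
  by (simp add: glue_V_def)

lemma ident_eq_p: "ident p q a = p \<longleftrightarrow> a = p \<or> a = q"
  by (auto simp: ident_def)

lemma ident_eq_w: "w \<noteq> p \<Longrightarrow> w \<noteq> q \<Longrightarrow> ident p q a = w \<longleftrightarrow> a = w"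
  by (auto simp: ident_def)

lemma glue_not_q: "p \<noteq> q \<Longrightarrow> w \<in> glue_V V p q \<Longrightarrow> w \<noteq> q"
  by (auto simp: glue_V_def ident_def)

lemma glue_ends_simps: "fst (glue_ends ends p q e) = ident p q (fst (ends e))"
  "snd (glue_ends ends p q e) = ident p q (snd (ends e))"
  by (simp_all add: glue_ends_def map_prod_def split: prod.splits)

lemma adjacent_glue:
  assumes "adjacent E ends x y"
  shows "adjacent E (glue_ends ends p q) (ident p q x) (ident p q y)"
proof -
  obtain e where e: "e \<in> E" "ends e = (x, y) \<or> ends e = (y, x)" using assms unfolding adjacent_def by blast
  then have "glue_ends ends p q e = (ident p q x, ident p q y) \<or> glue_ends ends p q e = (ident p q y, ident p q x)"
    by (auto simp: glue_ends_def)
  then show ?thesis using e(1) unfolding adjacent_def by blast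
qed

lemma rtrancl_glue: "(adjacent E ends)\<^sup>*\<^sup>* x y \<Longrightarrow> (adjacent E (glue_ends ends p q))\<^sup>*\<^sup>* (ident p q x) (ident p q y)"
proof (induction rule: rtranclp_induct)
  case base then show ?case by simp
next
  case (step y z)
  show ?case by (rule rtranclp.rtrancl_into_rtrancl[OF step.IH adjacent_glue[OF step.hyps(2)]])
qed

lemma mg_glue:
  assumes "metrized_graph V E ends len"
  shows "metrized_graph (glue_V V p q) E (glue_ends ends p q) len"
proof -
  interpret mg V E ends len by (rule mg.intro) (fact assms)
  have "V \<noteq> {}" using assms by (simp add: metrized_graph_def)
  show ?thesis unfolding metrized_graph_def
  proof (intro conjI ballI)
    show "finite (glue_V V p q)" using finV by (simp add: glue_V_def)
    show "glue_V V p q \<noteq> {}" using \<open>V \<noteq> {}\<close> by (simp add: glue_V_def)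
    show "finite E" by (rule finE)
  next
    fix e assume e: "e \<in> E"
    show "fst (glue_ends ends p q e) \<in> glue_V V p q" "snd (glue_ends ends p q e) \<in> glue_V V p q"
      using e fstV sndV by (simp_all add: glue_ends_simps ident_in)
    show "len e > 0" using e lenpos by simp
  next
    fix a b assume "a \<in> glue_V V p q" "b \<in> glue_V V p q"
    then obtain x y where xy: "x \<in> V" "y \<in> V" "a = ident p q x" "b = ident p q y" by (auto simp: glue_V_def)
    have "(adjacent E ends)\<^sup>*\<^sup>* x y" using conn[OF xy(1,2)] .
    from rtrancl_glue[OF this, of p q] show "(adjacent E (glue_ends ends p q))\<^sup>*\<^sup>* a b" using xy by simp
  qed
qed

context mg
begin

lemma glue_outflow:
  fixes u :: "'a \<Rightarrow> real" and k :: real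
  assumes pV: "p \<in> V" and qV: "q \<in> V" and pq: "p \<noteq> q" and uq: "u q = u p"
  defines "v' \<equiv> (\<lambda>w. if w \<in> glue_V V p q then u w - k else 0)"
  shows "w \<in> glue_V V p q \<Longrightarrow> w \<noteq> p \<Longrightarrow> outflow E (glue_ends ends p q) len v' w = L u w"
    and "outflow E (glue_ends ends p q) len v' p = L u p + L u q"
proof -
  have uid: "u (ident p q x) = u x" for x using uq by (simp add: ident_def)
  have hv: "x \<in> V \<Longrightarrow> v' (ident p q x) = u x - k" for x
    unfolding v'_def using ident_in[of x V p q] uid[of x] by simp
  have hvp: "v' p = u p - k" using hv[OF pV] by (simp add: ident_def)
  {
    assume w: "w \<in> glue_V V p q" "w \<noteq> p"
    have wq: "w \<noteq> q" using glue_not_q[OF pq w(1)] .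
    have hvw: "v' w = u w - k" using w by (simp add: v'_def)
    show "outflow E (glue_ends ends p q) len v' w = L u w"
      unfolding outflow_def
    proof (rule sum.cong[OF refl])
      fix e assume e: "e \<in> E"
      obtain a b where ab: "ends e = (a, b)" by fastforce
      have aV: "a \<in> V" and bV: "b \<in> V" using fstV[OF e] sndV[OF e] ab by auto
      have g: "fst (glue_ends ends p q e) = ident p q a" "snd (glue_ends ends p q e) = ident p q b"
        using ab by (simp_all add: glue_ends_simps)
      have ia: "(ident p q a = w) = (a = w)" and ib: "(ident p q b = w) = (b = w)"
        using ident_eq_w[OF w(2) wq] by simp_all
      show "(if fst (glue_ends ends p q e) = w then (v' w - v' (snd (glue_ends ends p q e))) / len e else 0) +
         (if snd (glue_ends ends p q e) = w then (v' w - v' (fst (glue_ends ends p q e))) / len e else 0) =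
         (if fst (ends e) = w then (u w - u (snd (ends e))) / len e else 0) +
         (if snd (ends e) = w then (u w - u (fst (ends e))) / len e else 0)"
        unfolding g ab fst_conv snd_conv ia ib hv[OF aV] hv[OF bV] hvw by simp
    qed
  }
  show "outflow E (glue_ends ends p q) len v' p = L u p + L u q"
    unfolding outflow_def sum.distrib[symmetric]
  proof (rule sum.cong[OF refl])
    fix e assume e: "e \<in> E"
    obtain a b where ab: "ends e = (a, b)" by fastforce
    have aV: "a \<in> V" and bV: "b \<in> V" using fstV[OF e] sndV[OF e] ab by auto
    have g: "fst (glue_ends ends p q e) = ident p q a" "snd (glue_ends ends p q e) = ident p q b"
      using ab by (simp_all add: glue_ends_simps)
    show "(if fst (glue_ends ends p q e) = p then (v' p - v' (snd (glue_ends ends p q e))) / len e else 0) +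
         (if snd (glue_ends ends p q e) = p then (v' p - v' (fst (glue_ends ends p q e))) / len e else 0) =
         (if fst (ends e) = p then (u p - u (snd (ends e))) / len e else 0) +
         (if snd (ends e) = p then (u p - u (fst (ends e))) / len e else 0) +
         ((if fst (ends e) = q then (u q - u (snd (ends e))) / len e else 0) +
         (if snd (ends e) = q then (u q - u (fst (ends e))) / len e else 0))"
      unfolding g ab fst_conv snd_conv ident_eq_p hv[OF aV] hv[OF bV] hvp uq
      using pq by (cases "a = p"; cases "a = q"; cases "b = p"; cases "b = q") (simp_all add: diff_divide_distrib)
  qed
qed

end


theorem theorem2p3:
  fixes V :: "'a set" and E :: "'e set" and ends :: "'e \<Rightarrow> 'a \<times> 'a"
    and len :: "'e \<Rightarrow> real" and p q s t :: 'a
  assumes "metrized_graph V E ends len"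
    and "p \<in> V" "q \<in> V" "s \<in> V" "t \<in> V" "p \<noteq> q"
  shows "eff_res V E ends len s t =
           eff_res (glue_V V p q) E (glue_ends ends p q) len (ident p q s) (ident p q t)
           + (1 / eff_res V E ends len p q) * (jv V E ends len p q s - jv V E ends len p q t)\<^sup>2
         \<and> eff_res V E ends len s t \<ge>
           eff_res (glue_V V p q) E (glue_ends ends p q) len (ident p q s) (ident p q t)
         \<and> (eff_res V E ends len s t =
              eff_res (glue_V V p q) E (glue_ends ends p q) len (ident p q s) (ident p q t)
            \<longleftrightarrow> jv V E ends len p q s = jv V E ends len p q t)"
proof -
  note pV = assms(2) and qV = assms(3) and sV = assms(4) and tV = assms(5) and pq = assms(6)
  interpret G: mg V E ends len by (rule mg.intro) (fact assms(1))
  interpret H: mg "glue_V V p q" E "glue_ends ends p q" len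
    by (rule mg.intro) (rule mg_glue[OF assms(1)])
  define \<phi> where "\<phi> = G.volt s t"
  define \<psi> where "\<psi> = G.volt p q"
  have v\<phi>: "is_voltage V E ends len s t \<phi>" using G.volt sV tV by (simp add: \<phi>_def)
  have v\<psi>: "is_voltage V E ends len p q \<psi>" using G.volt pV qV by (simp add: \<psi>_def)
  define r where "r = \<psi> q"
  have r_eq: "eff_res V E ends len p q = r" by (simp add: eff_res_def G.jv_volt r_def \<psi>_def)
  have \<psi>p: "\<psi> p = 0" and \<phi>s: "\<phi> s = 0" using v\<phi> v\<psi> by (simp_all add: is_voltage_def)
  have en: "(\<Sum>w\<in>V. \<psi> w * G.L \<psi> w) = r" using G.pairing[OF v\<psi> pV qV] \<psi>p by (simp add: r_def)
  have rpos: "r > 0"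
  proof -
    have "r \<ge> 0" using G.energy_nonneg[of \<psi>] en by simp
    moreover have "r \<noteq> 0"
    proof
      assume "r = 0"
      then have "\<And>x y. x \<in> V \<Longrightarrow> y \<in> V \<Longrightarrow> \<psi> x = \<psi> y" using G.energy_zero en by metis
      then have "G.L \<psi> q = 0" using G.const_outflow qV by blast
      moreover have "G.L \<psi> q = 1" using v\<psi> qV pq by (simp add: is_voltage_def)
      ultimately show False by simp
    qed
    ultimately show ?thesis by simp
  qed
  have rec1: "\<phi> q - \<phi> p = \<psi> t - \<psi> s" using G.recip[OF v\<phi> sV tV v\<psi> pV qV] .
  have js: "jv V E ends len p q s = \<psi> s"
  proof -
    have v: "is_voltage V E ends len p s (G.volt p s)" using G.volt pV sV by simp
    have "G.volt p s q - G.volt p s p = \<psi> s - \<psi> p" using G.recip[OF v pV sV v\<psi> pV qV] .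
    then show ?thesis using v \<psi>p by (simp add: G.jv_volt is_voltage_def)
  qed
  have jt: "jv V E ends len p q t = \<psi> t"
  proof -
    have v: "is_voltage V E ends len p t (G.volt p t)" using G.volt pV tV by simp
    have "G.volt p t q - G.volt p t p = \<psi> t - \<psi> p" using G.recip[OF v pV tV v\<psi> pV qV] .
    then show ?thesis using v \<psi>p by (simp add: G.jv_volt is_voltage_def)
  qed
  have est: "eff_res V E ends len s t = \<phi> t" by (simp add: eff_res_def G.jv_volt \<phi>_def)
  define c where "c = (\<phi> q - \<phi> p) / r"
  define u where "u = (\<lambda>x. \<phi> x - c * \<psi> x)"
  have uq: "u q = u p" using rpos \<psi>p by (simp add: u_def c_def r_def)
  have Lu: "G.L u w = ((if w = t then 1 else 0) - (if w = s then 1 else 0)) - c * ((if w = q then 1 else 0) - (if w = p then 1 else 0))"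
    if "w \<in> V" for w
    using v\<phi> v\<psi> that unfolding u_def G.outflow_diff by (simp add: is_voltage_def)
  define v' where "v' = (\<lambda>w. if w \<in> glue_V V p q then u w - u s else 0)"
  have uid: "u (ident p q x) = u x" for x using uq by (simp add: ident_def)
  have vv': "is_voltage (glue_V V p q) E (glue_ends ends p q) len (ident p q s) (ident p q t) v'"
    unfolding is_voltage_def
  proof (intro conjI allI impI ballI)
    show "v' (ident p q s) = 0" using ident_in[OF sV] uid by (simp add: v'_def)
  next
    fix w assume "w \<notin> glue_V V p q" then show "v' w = 0" by (simp add: v'_def)
  next
    fix w assume wV': "w \<in> glue_V V p q"
    show "outflow E (glue_ends ends p q) len v' w =
      (if w = ident p q t then 1 else 0) - (if w = ident p q s then 1 else 0)"
    proof (cases "w = p")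
      case True
      have "outflow E (glue_ends ends p q) len v' w = G.L u p + G.L u q"
        using G.glue_outflow(2)[OF pV qV pq uq, of "u s"] True by (simp add: v'_def)
      also have "\<dots> = (if p = ident p q t then 1 else 0) - (if p = ident p q s then 1 else 0)"
        using Lu[OF pV] Lu[OF qV] pq ident_eq_p[of p q t] ident_eq_p[of p q s]
        by (auto simp: eq_commute[of p])
      finally show ?thesis using True by simp
    next
      case False
      have wq: "w \<noteq> q" using glue_not_q[OF pq wV'] .
      have wV: "w \<in> V" using wV' wq pV by (auto simp: glue_V_def ident_def)
      have "outflow E (glue_ends ends p q) len v' w = G.L u w"
        using G.glue_outflow(1)[OF pV qV pq uq wV' False, of "u s"] by (simp add: v'_def)
      also have "\<dots> = (if w = ident p q t then 1 else 0) - (if w = ident p q s then 1 else 0)"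
        using Lu[OF wV] False wq ident_eq_w[OF False wq, of t] ident_eq_w[OF False wq, of s]
        by (auto simp: eq_commute[of w])
      finally show ?thesis .
    qed
  qed
  have "H.volt (ident p q s) (ident p q t) = v'"
    by (rule H.volt_eq[OF ident_in[OF sV] vv'])
  then have r'eq: "eff_res (glue_V V p q) E (glue_ends ends p q) len (ident p q s) (ident p q t) = u t - u s"
    using ident_in[OF tV, of p q] uid[of t] by (simp add: eff_res_def H.jv_volt v'_def)
  have main: "\<phi> t = (u t - u s) + (1 / r) * (\<psi> s - \<psi> t)\<^sup>2"
  proof -
    have c': "c = (\<psi> t - \<psi> s) / r" using rec1 by (simp add: c_def)
    have a1: "u t - u s = \<phi> t - c * (\<psi> t - \<psi> s)" by (simp add: u_def \<phi>s algebra_simps)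
    have a2: "c * (\<psi> t - \<psi> s) = (1 / r) * (\<psi> s - \<psi> t)\<^sup>2"
      using rpos unfolding c' power2_eq_square by (simp add: field_simps)
    show ?thesis using a1 a2 by simp
  qed
  have sq: "(1 / r) * (\<psi> s - \<psi> t)\<^sup>2 \<ge> 0" using rpos by simp
  have sq0: "(1 / r) * (\<psi> s - \<psi> t)\<^sup>2 = 0 \<longleftrightarrow> \<psi> s = \<psi> t" using rpos by simp
  show ?thesis unfolding est r'eq r_eq js jt using main sq sq0 by linarith
qed

end
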